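(* Let $t:\Sigma^*\to\Omega^*$ be a partial function with suffix-closed domain. If $X\subseteq\mathrm{dom}(t)$ contains a linear fooling set for $t$, then the $\overleftarrow{t}$-growth of $X$ is exponential.
   Context: The suffix expansion $\overleftarrow{t}$ maps $a_1\cdots a_n\in\mathrm{dom}(t)$ to the sequence $(t(a_1\cdots a_n),t(a_2\cdots a_n),\dots,t(a_n))$. The $\overleftarrow{t}$-growth of $X$ is $n\mapsto|\overleftarrow{t}(X\cap\Sigma^{\le n})|$; exponential means $\ge c^n$ for some $c>1$ and infinitely many $n$. A linear fooling scheme for $t$ is $(u_2,v_2,u,v,Z)$ with $u_2,v_2,u,v\in\Sigma^*$, $Z\subseteq\Sigma^*$, $u_2$ a suffix of $u$, $v_2$ a suffix of $v$, $|u_2|=|v_2|$, $\{u_2,v_2\}\{u,v\}^*Z\subseteq\mathrm{dom}(t)$, and for every $n\in\mathbb N$ there is $z_n\in Z$ with $|z_n|\in O(n)$ and $t(u_2wz_n)\neq t(v_2wz_n)$ for all $w\in\{u,v\}^{\le n}$. The set $\{u_2,v_2\}\{u,v\}^*Z$ is a linear fooling set for $t$; $X$ contains one if some linear fooling set is a subset of $X$. *)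

theory Defs
  imports Main "HOL-Library.Sublist" "HOL-Library.Landau_Symbols"
begin

definition suffix_closed_dom :: "('a list \<Rightarrow> 'b list option) \<Rightarrow> bool" where
  "suffix_closed_dom t \<longleftrightarrow> (\<forall>w \<in> dom t. \<forall>s. suffix s w \<longrightarrow> s \<in> dom t)"

definition suffix_expansion :: "('a list \<Rightarrow> 'b list option) \<Rightarrow> 'a list \<Rightarrow> 'b list list" where
  "suffix_expansion t w = map (\<lambda>i. the (t (drop i w))) [0..<length w]"

definition growth :: "('a list \<Rightarrow> 'b list option) \<Rightarrow> 'a list set \<Rightarrow> nat \<Rightarrow> nat" where
  "growth t X n = card (suffix_expansion t ` (X \<inter> {w. length w \<le> n}))"

definition exponential :: "(nat \<Rightarrow> nat) \<Rightarrow> bool" where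
  "exponential f \<longleftrightarrow> (\<exists>c::real. c > 1 \<and> (\<exists>\<^sub>\<infinity>n. real (f n) \<ge> c ^ n))"

definition star_words :: "'a list set \<Rightarrow> 'a list set" where
  "star_words A = {concat ws | ws. set ws \<subseteq> A}"

definition pow_le :: "'a list set \<Rightarrow> nat \<Rightarrow> 'a list set" where
  "pow_le A n = {concat ws | ws. set ws \<subseteq> A \<and> length ws \<le> n}"

definition fooling_set :: "'a list \<Rightarrow> 'a list \<Rightarrow> 'a list \<Rightarrow> 'a list \<Rightarrow> 'a list set \<Rightarrow> 'a list set" where
  "fooling_set u2 v2 u v Z = {x @ w @ z | x w z. x \<in> {u2, v2} \<and> w \<in> star_words {u, v} \<and> z \<in> Z}"

definition linear_fooling_scheme ::
  "('a list \<Rightarrow> 'b list option) \<Rightarrow> 'a list \<Rightarrow> 'a list \<Rightarrow> 'a list \<Rightarrow> 'a list \<Rightarrow> 'a list set \<Rightarrow> bool" where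
  "linear_fooling_scheme t u2 v2 u v Z \<longleftrightarrow>
     suffix u2 u \<and> suffix v2 v \<and> length u2 = length v2 \<and>
     fooling_set u2 v2 u v Z \<subseteq> dom t \<and>
     (\<exists>zs :: nat \<Rightarrow> 'a list.
        (\<forall>n. zs n \<in> Z) \<and>
        (\<lambda>n. real (length (zs n))) \<in> O(\<lambda>n. real n) \<and>
        (\<forall>n. \<forall>w \<in> pow_le {u, v} n. t (u2 @ w @ zs n) \<noteq> t (v2 @ w @ zs n)))"

definition contains_linear_fooling_set ::
  "('a list \<Rightarrow> 'b list option) \<Rightarrow> 'a list set \<Rightarrow> bool" where
  "contains_linear_fooling_set t X \<longleftrightarrow>
     (\<exists>u2 v2 u v Z. linear_fooling_scheme t u2 v2 u v Z \<and> fooling_set u2 v2 u v Z \<subseteq> X)"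

end

theory Submission
  imports Defs "HOL-Library.Infinite_Set"
begin

definition blk :: "'a list \<Rightarrow> 'a list \<Rightarrow> bool \<Rightarrow> 'a list" where
  "blk u v b = (if b then u else v)"

definition word :: "'a list \<Rightarrow> 'a list \<Rightarrow> bool list \<Rightarrow> 'a list" where
  "word u v bs = concat (map (blk u v) bs)"

lemma diff_split:
  "length xs = length ys \<Longrightarrow> xs \<noteq> ys \<Longrightarrow>
   \<exists>c b b' p p'. xs = c @ b # p \<and> ys = c @ b' # p' \<and> b \<noteq> b'"
proof (induction xs ys rule: list_induct2)
  case Nil
  then show ?case by simp
next
  case (Cons x xs y ys)
  show ?case
  proof (cases "x = y")
    case True
    then have "xs \<noteq> ys" using Cons by simp
    then obtain c b b' p p' where "xs = c @ b # p" "ys = c @ b' # p'" "b \<noteq> b'"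
      using Cons by blast
    then show ?thesis using True
      by (metis append_Cons)
  next
    case False
    then show ?thesis by (metis append_Nil)
  qed
qed

lemma diff_split_rev:
  assumes "length xs = length ys" "xs \<noteq> ys"
  shows "\<exists>P P' b b' C. xs = P @ b # C \<and> ys = P' @ b' # C \<and> b \<noteq> b' \<and> length P = length P'"
proof -
  have "length (rev xs) = length (rev ys)" "rev xs \<noteq> rev ys" using assms by auto
  from diff_split[OF this] obtain c b b' p p' where
    h: "rev xs = c @ b # p" "rev ys = c @ b' # p'" "b \<noteq> b'" by blast
  have "xs = rev p @ b # rev c" using h(1) by (metis rev_append rev_rev_ident rev.simps append_assoc append_Cons append_Nil)
  moreover have "ys = rev p' @ b' # rev c" using h(2) by (metis rev_append rev_rev_ident rev.simps append_assoc append_Cons append_Nil)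
  ultimately show ?thesis using h(3) assms(1) by fastforce
qed

lemma word_in_star: "word u v bs \<in> star_words {u, v}"
  unfolding word_def star_words_def by (intro CollectI exI[of _ "map (blk u v) bs"]) (auto simp: blk_def)

lemma word_in_pow_le: "length bs \<le> n \<Longrightarrow> word u v bs \<in> pow_le {u, v} n"
  unfolding word_def pow_le_def by (intro CollectI exI[of _ "map (blk u v) bs"]) (auto simp: blk_def)

lemma word_append: "word u v (xs @ ys) = word u v xs @ word u v ys"
  unfolding word_def by simp

lemma word_Cons: "word u v (b # ys) = blk u v b @ word u v ys"
  unfolding word_def by simp

lemma length_word: "length (word u v bs) \<le> length bs * (length u + length v)"
  by (induction bs) (auto simp: word_def blk_def)

lemma length_suffix_expansion: "length (suffix_expansion t w) = length w"
  unfolding suffix_expansion_def by simp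

lemma nth_suffix_expansion: "i < length w \<Longrightarrow> suffix_expansion t w ! i = the (t (drop i w))"
  unfolding suffix_expansion_def by simp

lemma key:
  assumes "suffix u2 u" "suffix v2 v" "length u2 = length v2"
    "fooling_set u2 v2 u v Z \<subseteq> dom t" "z \<in> Z"
    "\<forall>w \<in> pow_le {u,v} n. t (u2 @ w @ z) \<noteq> t (v2 @ w @ z)"
    "length bs = n" "length bs' = n" "bs \<noteq> bs'"
  shows "suffix_expansion t (u2 @ word u v bs @ z) \<noteq> suffix_expansion t (u2 @ word u v bs' @ z)"
proof
  assume eq: "suffix_expansion t (u2 @ word u v bs @ z) = suffix_expansion t (u2 @ word u v bs' @ z)"
  define s where "s = u2 @ word u v bs @ z"
  define s' where "s' = u2 @ word u v bs' @ z"
  have lens: "length s = length s'" using eq unfolding s_def s'_def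
    by (metis length_suffix_expansion)
  obtain P P' b b' C where sp: "bs = P @ b # C" "bs' = P' @ b' # C" "b \<noteq> b'"
    using diff_split_rev[of bs bs'] assms by auto
  define tl2 where "tl2 = (\<lambda>b. if b then u2 else v2)"
  have q: "\<exists>q. blk u v c = q @ tl2 c" for c
    using assms(1,2) unfolding suffix_def blk_def tl2_def by auto
  obtain q where q1: "blk u v b = q @ tl2 b" using q by blast
  obtain q' where q2: "blk u v b' = q' @ tl2 b'" using q by blast
  define x where "x = word u v C @ z"
  have ltl: "length (tl2 c) = length u2" for c using assms(3) by (simp add: tl2_def)
  have "[] \<in> pow_le {u,v} n" unfolding pow_le_def by (auto intro!: exI[of _ "[]"])
  hence "u2 \<noteq> v2" using assms(6) by auto
  hence "u2 \<noteq> []" using assms(3) by auto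
  have s_eq: "s = (u2 @ word u v P @ q) @ (tl2 b @ x)"
    unfolding s_def x_def sp word_append word_Cons q1 by simp
  have s'_eq: "s' = (u2 @ word u v P' @ q') @ (tl2 b' @ x)"
    unfolding s'_def x_def sp word_append word_Cons q2 by simp
  define i where "i = length s - length (tl2 b @ x)"
  have i1: "drop i s = tl2 b @ x" unfolding i_def by (subst (2) s_eq, simp add: s_eq)
  have i2: "drop i s' = tl2 b' @ x" unfolding i_def lens
    by (subst (2) s'_eq, simp add: s'_eq ltl)
  have ilt: "i < length s" unfolding i_def using \<open>u2 \<noteq> []\<close> ltl[of b] s_eq
    by (metis add_diff_cancel_right' append_is_Nil_conv diff_less length_append length_greater_0_conv zero_less_diff length_0_conv)
  have "the (t (drop i s)) = the (t (drop i s'))"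
    using eq nth_suffix_expansion[OF ilt, of t] nth_suffix_expansion[of i s' t] ilt lens
    unfolding s_def s'_def by simp
  hence th: "the (t (tl2 b @ x)) = the (t (tl2 b' @ x))" using i1 i2 by simp
  have mem: "tl2 c @ x \<in> dom t" for c
    using assms(4,5) unfolding fooling_set_def x_def tl2_def
    using word_in_star[of u v C] by (auto 6 0)
  have "length C \<le> n" using sp assms(7) by simp
  hence "word u v C \<in> pow_le {u,v} n" by (rule word_in_pow_le)
  hence ne: "t (tl2 b @ x) \<noteq> t (tl2 b' @ x)"
    using assms(6) sp(3) unfolding x_def tl2_def by (cases b; cases b'; auto simp: eq_commute)
  from mem[of b] mem[of b'] obtain y y' where "t (tl2 b @ x) = Some y" "t (tl2 b' @ x) = Some y'"
    by blast
  then show False using th ne by simp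
qed

lemma growth_mono:
  fixes t :: "'a::finite list \<Rightarrow> 'b list option"
  assumes "N \<le> N'"
  shows "growth t X N \<le> growth t X N'"
proof -
  have "finite {xs::'a list. set xs \<subseteq> UNIV \<and> length xs \<le> N'}"
    by (rule finite_lists_length_le) simp
  hence "finite (X \<inter> {w. length w \<le> N'})" by (rule rev_finite_subset) auto
  thus ?thesis unfolding growth_def using assms
    by (intro card_mono) auto
qed

lemma growth_lb:
  fixes t :: "'a::finite list \<Rightarrow> 'b list option"
  assumes "suffix u2 u" "suffix v2 v" "length u2 = length v2"
    "fooling_set u2 v2 u v Z \<subseteq> dom t" "z \<in> Z"
    "\<forall>w \<in> pow_le {u,v} n. t (u2 @ w @ z) \<noteq> t (v2 @ w @ z)"
    "fooling_set u2 v2 u v Z \<subseteq> X"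
    "length u2 + n * (length u + length v) + length z \<le> N"
  shows "2 ^ n \<le> growth t X N"
proof -
  define S where "S = {bs::bool list. set bs \<subseteq> UNIV \<and> length bs = n}"
  define f where "f = (\<lambda>bs. suffix_expansion t (u2 @ word u v bs @ z))"
  have cS: "card S = 2 ^ n" unfolding S_def using card_lists_length_eq[of "UNIV::bool set" n] by simp
  have inj: "inj_on f S" unfolding inj_on_def S_def f_def
    using key[OF assms(1-6)] by blast
  have fin: "finite {xs::'a list. set xs \<subseteq> UNIV \<and> length xs \<le> N}"
    by (rule finite_lists_length_le) simp
  hence fin2: "finite (X \<inter> {w. length w \<le> N})" by (rule rev_finite_subset) auto
  have sub: "f ` S \<subseteq> suffix_expansion t ` (X \<inter> {w. length w \<le> N})"
  proof
    fix y assume "y \<in> f ` S"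
    then obtain bs where bs: "length bs = n" "y = f bs" unfolding S_def by auto
    have "u2 @ word u v bs @ z \<in> fooling_set u2 v2 u v Z"
      unfolding fooling_set_def using word_in_star[of u v bs] assms(5) by blast
    moreover have "length (u2 @ word u v bs @ z) \<le> N"
      using length_word[of u v bs] bs assms(8) by simp
    ultimately show "y \<in> suffix_expansion t ` (X \<inter> {w. length w \<le> N})"
      using assms(7) bs unfolding f_def by blast
  qed
  have "card (f ` S) = 2 ^ n" using card_image[OF inj] cS by simp
  moreover have "card (f ` S) \<le> growth t X N" unfolding growth_def
    using card_mono[OF finite_imageI[OF fin2] sub] .
  ultimately show ?thesis by simp
qed

theorem proposition5:
  fixes t :: "'a::finite list \<Rightarrow> 'b list option" and X :: "'a list set"
  assumes "suffix_closed_dom t"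
    and "X \<subseteq> dom t"
    and "contains_linear_fooling_set t X"
  shows "exponential (growth t X)"
proof -
  obtain u2 v2 u v Z where sch: "linear_fooling_scheme t u2 v2 u v Z" and fX: "fooling_set u2 v2 u v Z \<subseteq> X"
    using assms(3) unfolding contains_linear_fooling_set_def by blast
  obtain zs where zs: "\<forall>n. zs n \<in> Z" "(\<lambda>n. real (length (zs n))) \<in> O(\<lambda>n. real n)"
    "\<forall>n. \<forall>w \<in> pow_le {u, v} n. t (u2 @ w @ zs n) \<noteq> t (v2 @ w @ zs n)"
    and s: "suffix u2 u" "suffix v2 v" "length u2 = length v2" "fooling_set u2 v2 u v Z \<subseteq> dom t"
    using sch unfolding linear_fooling_scheme_def by blast
  obtain K where "K > 0" and ev: "eventually (\<lambda>n. norm (real (length (zs n))) \<le> K * norm (real n)) sequentially"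
    using zs(2) by (elim landau_o.bigE)
  then obtain n0 where n0: "\<And>n. n \<ge> n0 \<Longrightarrow> real (length (zs n)) \<le> K * real n"
    unfolding eventually_sequentially by auto
  define M :: nat where "M = length u2 + length u + length v + nat \<lceil>K\<rceil> + 1"
  have M1: "M \<ge> 1" unfolding M_def by simp
  have gb: "2 ^ n \<le> growth t X (M * n)" if "n \<ge> n0" "n \<ge> 1" for n
  proof -
    have "real (length (zs n)) \<le> K * real n" using n0 that by simp
    also have "\<dots> \<le> real (nat \<lceil>K\<rceil>) * real n"
      by (intro mult_right_mono) (auto, linarith)
    finally have z: "length (zs n) \<le> nat \<lceil>K\<rceil> * n"
      by (metis of_nat_le_iff of_nat_mult)
    have h1: "length u2 \<le> n * length u2" using that(2) by simp
    have h2: "M * n = n * length u2 + n * length u + n * length v + n * nat \<lceil>K\<rceil> + n"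
      unfolding M_def by (simp add: algebra_simps)
    have h3: "n * (length u + length v) = n * length u + n * length v" by (simp add: algebra_simps)
    have z': "length (zs n) \<le> n * nat \<lceil>K\<rceil>" using z by (simp add: mult.commute)
    have "length u2 + n * (length u + length v) + length (zs n) \<le> M * n"
      using h1 h2 h3 z' by linarith
    moreover have "zs n \<in> Z" using zs(1) by blast
    moreover have "\<forall>w \<in> pow_le {u, v} n. t (u2 @ w @ zs n) \<noteq> t (v2 @ w @ zs n)" using zs(3) by blast
    ultimately show ?thesis using growth_lb[OF s(1-4) _ _ fX] by blast
  qed
  define c :: real where "c = 2 powr (1 / real M)"
  have c1: "c > 1" unfolding c_def using M1 by simp
  have cM: "c ^ M = 2" unfolding c_def using M1 by (simp add: powr_power)
  have cpow: "c ^ (M * n) = 2 ^ n" for n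
    by (simp only: power_mult cM)
  have "\<exists>\<^sub>\<infinity>N. real (growth t X N) \<ge> c ^ N"
    unfolding INFM_nat
  proof
    fix m
    define n where "n = m + n0 + 1"
    have "n \<le> M * n" using M1 by simp
    hence "M * n > m" unfolding n_def by linarith
    moreover have "2 ^ n \<le> growth t X (M * n)" using gb[of n] unfolding n_def by simp
    hence "real (2 ^ n) \<le> real (growth t X (M * n))" by (simp only: of_nat_le_iff)
    hence "real (growth t X (M * n)) \<ge> c ^ (M * n)" unfolding cpow by simp
    ultimately show "\<exists>N>m. real (growth t X N) \<ge> c ^ N" by blast
  qed
  thus ?thesis unfolding exponential_def using c1 by blast
qed

end
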